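(* Let $I$ be any set of nonnegative integers. Let $\mathcal A_I$ be the class of simple graphs whose degree sequence $d$ satisfies $\Delta_{m(d)}(d)\in I$, and let $\mathcal B_I$ be the class of simple graphs whose degree sequence $d$ satisfies $\Delta^*(d)\in I$. Then both $\mathcal A_I$ and $\mathcal B_I$ are closed under graph complementation. In particular (taking $\mathcal A_{\{0\}}$, $\mathcal B_{\{0\}}$, $\mathcal B_{\{0,1\}}$) the classes of split graphs, threshold graphs, and weakly threshold graphs are closed under complementation.
   Context: Degree sequences $d=(d_1,\dots,d_n)$ are listed in nonincreasing order. $m(d)=\max\{i : d_i\ge i-1\}$. For integers $k\ge 0$, $\Delta_k(d)=k(k-1)+\sum_{i>k}\min\{k,d_i\}-\sum_{i\le k}d_i$, and $\Delta^*(d)=\max\{\Delta_k(d):1\le k\le m(d)\}$. A split graph is one whose vertex set partitions into a clique and an independent set; a graph with degree sequence $d$ is split iff $\Delta_{m(d)}(d)=0$. A graph with degree sequence $d$ is threshold iff $\Delta_k(d)=0$ for all $1\le k\le m(d)$ (i.e. $\Delta^*(d)=0$). A graph is weakly threshold iff its degree sequence $d$ satisfies $\Delta_k(d)\le 1$ for all $1\le k\le m(d)$. *)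

theory Defs
  imports Main "HOL-Library.Multiset"
begin

definition simple_graph :: "'a set \<Rightarrow> 'a set set \<Rightarrow> bool" where
  "simple_graph V E \<longleftrightarrow> finite V \<and>
     E \<subseteq> {e. \<exists>u v. e = {u, v} \<and> u \<noteq> v \<and> u \<in> V \<and> v \<in> V}"

definition complement :: "'a set \<Rightarrow> 'a set set \<Rightarrow> 'a set set" where
  "complement V E = {{u, v} | u v. u \<in> V \<and> v \<in> V \<and> u \<noteq> v \<and> {u, v} \<notin> E}"

definition degree :: "'a set set \<Rightarrow> 'a \<Rightarrow> nat" where
  "degree E v = card {e \<in> E. v \<in> e}"

text \<open>Degree sequence, listed in nonincreasing order; entry d_i is \<open>d ! (i - 1)\<close>.\<close>
definition deg_seq :: "'a set \<Rightarrow> 'a set set \<Rightarrow> nat list" where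
  "deg_seq V E = rev (sorted_list_of_multiset (image_mset (degree E) (mset_set V)))"

definition dd :: "nat list \<Rightarrow> nat \<Rightarrow> int" where
  "dd d i = int (d ! (i - 1))"

definition m_of :: "nat list \<Rightarrow> nat" where
  "m_of d = Max {i \<in> {1..length d}. dd d i \<ge> int i - 1}"

definition Delta :: "nat list \<Rightarrow> nat \<Rightarrow> int" where
  "Delta d k = int k * (int k - 1) + (\<Sum>i\<in>{k+1..length d}. min (int k) (dd d i))
                 - (\<Sum>i\<in>{1..k}. dd d i)"

definition Delta_star :: "nat list \<Rightarrow> int" where
  "Delta_star d = Max (Delta d ` {1..m_of d})"

definition split_graph :: "'a set \<Rightarrow> 'a set set \<Rightarrow> bool" where
  "split_graph V E \<longleftrightarrow> (\<exists>K S. K \<union> S = V \<and> K \<inter> S = {} \<and>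
      (\<forall>u\<in>K. \<forall>v\<in>K. u \<noteq> v \<longrightarrow> {u, v} \<in> E) \<and>
      (\<forall>u\<in>S. \<forall>v\<in>S. {u, v} \<notin> E))"

definition threshold_graph :: "'a set \<Rightarrow> 'a set set \<Rightarrow> bool" where
  "threshold_graph V E \<longleftrightarrow>
     (\<forall>k\<in>{1..m_of (deg_seq V E)}. Delta (deg_seq V E) k = 0)"

definition weakly_threshold_graph :: "'a set \<Rightarrow> 'a set set \<Rightarrow> bool" where
  "weakly_threshold_graph V E \<longleftrightarrow>
     (\<forall>k\<in>{1..m_of (deg_seq V E)}. Delta (deg_seq V E) k \<le> 1)"

end

theory Submission
  imports Defs
begin


definition T :: "nat list \<Rightarrow> nat \<Rightarrow> int" where
  "T d k = (\<Sum>i\<in>{k+1..length d}. min (int k) (dd d i)) - (\<Sum>i\<in>{1..k}. max 0 (dd d i - int k + 1))"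

definition good :: "nat list \<Rightarrow> bool" where
  "good d \<longleftrightarrow> (\<forall>i j. 1 \<le> i \<longrightarrow> i \<le> j \<longrightarrow> j \<le> length d \<longrightarrow> dd d j \<le> dd d i) \<and>
     (\<forall>i. 1 \<le> i \<longrightarrow> i \<le> length d \<longrightarrow> dd d i \<le> int (length d) - 1)"

definition cmp :: "nat list \<Rightarrow> nat list" where
  "cmp d = rev (map (\<lambda>x. length d - 1 - x) d)"

lemma dd_nonneg: "0 \<le> dd d i" by (simp add: dd_def)

lemma goodD1: "good d \<Longrightarrow> 1 \<le> i \<Longrightarrow> i \<le> j \<Longrightarrow> j \<le> length d \<Longrightarrow> dd d j \<le> dd d i"
  by (simp add: good_def)
lemma goodD2: "good d \<Longrightarrow> 1 \<le> i \<Longrightarrow> i \<le> length d \<Longrightarrow> dd d i \<le> int (length d) - 1"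
  by (simp add: good_def)

lemma split_sum:
  fixes f :: "nat \<Rightarrow> int"
  assumes "a \<le> b" "b \<le> c"
  shows "(\<Sum>i\<in>{a+1..c}. f i) = (\<Sum>i\<in>{a+1..b}. f i) + (\<Sum>i\<in>{b+1..c}. f i)"
proof -
  have "{a+1..c} = {a+1..b} \<union> {b+1..c}" using assms by auto
  moreover have "{a+1..b} \<inter> {b+1..c} = {}" by auto
  ultimately show ?thesis by (simp add: sum.union_disjoint)
qed

lemma T0: "T d 0 = 0"
  unfolding T_def using dd_nonneg by (simp add: min_absorb1)

lemma m_set:
  assumes "length d \<ge> 1"
  shows "finite {i\<in>{1..length d}. dd d i \<ge> int i - 1}" "1 \<in> {i\<in>{1..length d}. dd d i \<ge> int i - 1}"
  using assms dd_nonneg[of d 1] by auto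

lemma m_props:
  assumes "length d \<ge> 1"
  shows "1 \<le> m_of d" "m_of d \<le> length d" "dd d (m_of d) \<ge> int (m_of d) - 1"
    "\<And>i. m_of d < i \<Longrightarrow> i \<le> length d \<Longrightarrow> dd d i < int i - 1"
proof -
  note S = m_set[OF assms]
  have ne: "{i\<in>{1..length d}. dd d i \<ge> int i - 1} \<noteq> {}" using S(2) by blast
  have "m_of d \<in> {i\<in>{1..length d}. dd d i \<ge> int i - 1}"
    unfolding m_of_def using Max_in[OF S(1) ne] .
  then show "1 \<le> m_of d" "m_of d \<le> length d" "dd d (m_of d) \<ge> int (m_of d) - 1" by auto
  then have m1: "1 \<le> m_of d" by auto
  fix i assume a: "m_of d < i" "i \<le> length d"
  show "dd d i < int i - 1"
  proof (rule ccontr)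
    assume "\<not> dd d i < int i - 1"
    then have "i \<in> {i\<in>{1..length d}. dd d i \<ge> int i - 1}" using a m1 by auto
    then have "i \<le> m_of d" unfolding m_of_def using Max_ge[OF S(1)] by blast
    then show False using a by simp
  qed
qed

lemma m_low:
  assumes "good d" "length d \<ge> 1" "1 \<le> i" "i \<le> k" "k \<le> m_of d"
  shows "dd d i \<ge> int k - 1"
proof -
  have "dd d (m_of d) \<le> dd d i" using goodD1[OF assms(1) assms(3), of "m_of d"] assms m_props[OF assms(2)] by auto
  then show ?thesis using m_props(3)[OF assms(2)] assms by linarith
qed

lemma m_high:
  assumes "good d" "length d \<ge> 1" "m_of d < i" "i \<le> length d"
  shows "dd d i \<le> int (m_of d) - 1"
proof -
  have "dd d i \<le> dd d (m_of d + 1)" using goodD1[OF assms(1), of "m_of d + 1" i] assms by auto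
  moreover have "dd d (m_of d + 1) < int (m_of d + 1) - 1" using m_props(4)[OF assms(2), of "m_of d + 1"] assms by auto
  ultimately show ?thesis by simp
qed

lemma F2:
  assumes "good d" "length d \<ge> 1" "1 \<le> k" "k \<le> m_of d"
  shows "Delta d k = T d k"
proof -
  have "(\<Sum>i\<in>{1..k}. max 0 (dd d i - int k + 1)) = (\<Sum>i\<in>{1..k}. dd d i - (int k - 1))"
  proof (intro sum.cong refl)
    fix x assume "x \<in> {1..k}"
    then have "int k - 1 \<le> dd d x" using m_low[OF assms(1,2) _ _ assms(4)] by auto
    then show "max 0 (dd d x - int k + 1) = dd d x - (int k - 1)" by simp
  qed
  also have "\<dots> = (\<Sum>i\<in>{1..k}. dd d i) - int k * (int k - 1)"
    by (simp add: sum_subtractf)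
  finally show ?thesis unfolding T_def Delta_def by simp
qed

lemma sum_const_le:
  fixes f :: "nat \<Rightarrow> int"
  assumes "\<And>i. i \<in> A \<Longrightarrow> f i \<le> c" "finite A"
  shows "sum f A \<le> int (card A) * c"
  using sum_mono[of A f "\<lambda>_. c"] assms by simp

lemma F3:
  assumes g: "good d" and n: "length d \<ge> 1" and k: "m_of d \<le> k" "k \<le> length d"
  shows "\<exists>j\<le>m_of d. T d k \<le> T d j"
proof -
  let ?n = "length d" and ?m = "m_of d"
  define j where "j = (if k < ?n then nat (dd d (k+1)) else 0)"
  have jm: "j \<le> ?m"
  proof (cases "k < ?n")
    case True
    then have "dd d (k+1) \<le> int ?m - 1" using m_high[OF g n, of "k+1"] k by auto
    then show ?thesis using True unfolding j_def by auto
  qed (simp add: j_def)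
  have jk: "j \<le> k" using jm k by simp
  have hi: "dd d i \<le> int j" if "k < i" "i \<le> ?n" for i
  proof -
    have "k < ?n" using that by simp
    then show ?thesis using goodD1[OF g, of "k+1" i] that dd_nonneg[of d "k+1"] unfolding j_def by auto
  qed
  have lo: "int j \<le> dd d i" if "1 \<le> i" "i \<le> k" for i
  proof (cases "k < ?n")
    case True
    then show ?thesis using goodD1[OF g, of i "k+1"] that dd_nonneg[of d "k+1"] unfolding j_def by auto
  qed (simp add: j_def dd_nonneg)
  have s1: "(\<Sum>i\<in>{j+1..?n}. min (int j) (dd d i)) = (\<Sum>i\<in>{j+1..k}. min (int j) (dd d i)) + (\<Sum>i\<in>{k+1..?n}. min (int j) (dd d i))"
    using split_sum[OF jk k(2)] .
  have s2: "(\<Sum>i\<in>{j+1..k}. min (int j) (dd d i)) = (\<Sum>i\<in>{j+1..k}. int j)"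
    using lo by (intro sum.cong refl) (simp add: min_absorb1)
  have s3: "(\<Sum>i\<in>{k+1..?n}. min (int j) (dd d i)) = (\<Sum>i\<in>{k+1..?n}. min (int k) (dd d i))"
  proof (intro sum.cong refl)
    fix i assume "i \<in> {k+1..?n}"
    then have "dd d i \<le> int j" using hi by auto
    then show "min (int j) (dd d i) = min (int k) (dd d i)" using jk by simp
  qed
  have s4: "(\<Sum>i\<in>{1..k}. max 0 (dd d i - int k + 1)) = (\<Sum>i\<in>{1..j}. max 0 (dd d i - int k + 1)) + (\<Sum>i\<in>{j+1..k}. max 0 (dd d i - int k + 1))"
    using split_sum[of 0 j k "\<lambda>i. max 0 (dd d i - int k + 1)"] jk by simp
  have s5: "(\<Sum>i\<in>{j+1..k}. max 0 (dd d i - int k + 1)) \<ge> 0" by (intro sum_nonneg) simp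
  have s6: "(\<Sum>i\<in>{1..j}. max 0 (dd d i - int k + 1)) \<ge> (\<Sum>i\<in>{1..j}. max 0 (dd d i - int j + 1) - (int k - int j))"
  proof (intro sum_mono)
    fix i show "max 0 (dd d i - int j + 1) - (int k - int j) \<le> max 0 (dd d i - int k + 1)"
      using jk by (simp add: max_def)
  qed
  have s7: "(\<Sum>i\<in>{1..j}. max 0 (dd d i - int j + 1) - (int k - int j)) = (\<Sum>i\<in>{1..j}. max 0 (dd d i - int j + 1)) - int j * (int k - int j)"
    by (simp add: sum_subtractf)
  have cardjk: "(\<Sum>i\<in>{j+1..k}. int j) = int j * (int k - int j)" using jk by simp
  show ?thesis
    apply (rule exI[of _ j])
    using jm s1 s2 s3 s4 s5 s6 s7 cardjk unfolding T_def by linarith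
qed

lemma F3':
  assumes g: "good d" and n: "length d \<ge> 1" and k: "m_of d \<le> k" "k \<le> length d"
  shows "\<exists>j\<le>m_of d. T d j \<le> T d k"
proof -
  let ?n = "length d" and ?m = "m_of d"
  define A where "A = {i\<in>{1..?n}. dd d i \<ge> int k}"
  have fA: "finite A" unfolding A_def by simp
  define j where "j = (if A = {} then 0 else Max A)"
  have lo: "int k \<le> dd d i" if "1 \<le> i" "i \<le> j" for i
  proof -
    have "A \<noteq> {}" using that j_def by auto
    then have "j \<in> A" unfolding j_def using Max_in[OF fA] by auto
    then show ?thesis using goodD1[OF g that(1) that(2)] unfolding A_def by auto
  qed
  have hi: "dd d i < int k" if "j < i" "i \<le> ?n" for i
  proof (rule ccontr)
    assume "\<not> dd d i < int k"
    then have "i \<in> A" using that unfolding A_def by auto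
    then have "i \<le> j" unfolding j_def using Max_ge[OF fA] by auto
    then show False using that by simp
  qed
  have jm: "j \<le> ?m"
  proof (rule ccontr)
    assume c: "\<not> j \<le> ?m"
    then have "A \<noteq> {}" unfolding j_def by (cases "A = {}") auto
    then have "j \<in> A" unfolding j_def using Max_in[OF fA] by auto
    then have "j \<le> ?n" unfolding A_def by auto
    then have "dd d j \<le> int ?m - 1" using m_high[OF g n, of j] c by simp
    moreover have "int k \<le> dd d j" using lo[of j] \<open>\<not> j \<le> ?m\<close> m_props(1)[OF n] by simp
    ultimately show False using k by simp
  qed
  have jk: "j \<le> k" using jm k by simp
  have s1: "(\<Sum>i\<in>{j+1..?n}. min (int j) (dd d i)) = (\<Sum>i\<in>{j+1..k}. min (int j) (dd d i)) + (\<Sum>i\<in>{k+1..?n}. min (int j) (dd d i))"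
    using split_sum[OF jk k(2)] .
  have s2: "(\<Sum>i\<in>{j+1..k}. min (int j) (dd d i)) \<le> (\<Sum>i\<in>{j+1..k}. int j)"
    by (intro sum_mono) simp
  have s3: "(\<Sum>i\<in>{k+1..?n}. min (int j) (dd d i)) \<le> (\<Sum>i\<in>{k+1..?n}. min (int k) (dd d i))"
    using jk by (intro sum_mono) simp
  have s4: "(\<Sum>i\<in>{1..k}. max 0 (dd d i - int k + 1)) = (\<Sum>i\<in>{1..j}. max 0 (dd d i - int k + 1)) + (\<Sum>i\<in>{j+1..k}. max 0 (dd d i - int k + 1))"
    using split_sum[of 0 j k "\<lambda>i. max 0 (dd d i - int k + 1)"] jk by simp
  have s5: "(\<Sum>i\<in>{j+1..k}. max 0 (dd d i - int k + 1)) = 0"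
  proof (intro sum.neutral ballI)
    fix i assume "i \<in> {j+1..k}"
    then have "dd d i < int k" using hi k by auto
    then show "max 0 (dd d i - int k + 1) = 0" by simp
  qed
  have s6: "(\<Sum>i\<in>{1..j}. max 0 (dd d i - int k + 1)) = (\<Sum>i\<in>{1..j}. max 0 (dd d i - int j + 1)) - int j * (int k - int j)"
  proof -
    have "(\<Sum>i\<in>{1..j}. max 0 (dd d i - int k + 1)) = (\<Sum>i\<in>{1..j}. max 0 (dd d i - int j + 1) - (int k - int j))"
    proof (intro sum.cong refl)
      fix i assume "i \<in> {1..j}"
      then have "int k \<le> dd d i" using lo by auto
      then show "max 0 (dd d i - int k + 1) = max 0 (dd d i - int j + 1) - (int k - int j)" using jk by simp
    qed
    then show ?thesis by (simp add: sum_subtractf)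
  qed
  have cardjk: "(\<Sum>i\<in>{j+1..k}. int j) = int j * (int k - int j)" using jk by simp
  show ?thesis
    apply (rule exI[of _ j])
    using jm s1 s2 s3 s4 s5 s6 cardjk unfolding T_def by linarith
qed

lemma len_cmp[simp]: "length (cmp d) = length d" by (simp add: cmp_def)

lemma dd_cmp:
  assumes g: "good d" and i: "1 \<le> i" "i \<le> length d"
  shows "dd (cmp d) i = int (length d) - 1 - dd d (length d + 1 - i)"
proof -
  let ?n = "length d"
  have e: "cmp d ! (i-1) = ?n - 1 - d ! (?n - i)"
    using i by (simp add: cmp_def rev_nth)
  have b: "dd d (?n + 1 - i) \<le> int ?n - 1" using goodD2[OF g, of "?n + 1 - i"] i by simp
  have e2: "dd d (?n + 1 - i) = int (d ! (?n - i))" unfolding dd_def using i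
    by (simp add: Suc_diff_le)
  have "d ! (?n - i) \<le> ?n - 1" using b e2 by linarith
  then show ?thesis unfolding dd_def using e e2 i by (simp add: of_nat_diff dd_def)
qed

lemma good_cmp:
  assumes g: "good d"
  shows "good (cmp d)"
  unfolding good_def
proof (intro conjI allI impI)
  fix i j assume a: "1 \<le> i" "i \<le> j" "j \<le> length (cmp d)"
  then show "dd (cmp d) j \<le> dd (cmp d) i"
    using dd_cmp[OF g, of i] dd_cmp[OF g, of j] goodD1[OF g, of "length d + 1 - j" "length d + 1 - i"] by simp
next
  fix i assume a: "1 \<le> i" "i \<le> length (cmp d)"
  then show "dd (cmp d) i \<le> int (length (cmp d)) - 1"
    using dd_cmp[OF g, of i] dd_nonneg[of d "length d + 1 - i"] by simp
qed

lemma cmp_cmp: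
  assumes g: "good d"
  shows "cmp (cmp d) = d"
proof (rule nth_equalityI)
  show "length (cmp (cmp d)) = length d" by simp
  fix i assume i: "i < length (cmp (cmp d))"
  let ?n = "length d"
  have b: "dd d (i+1) \<le> int ?n - 1" using goodD2[OF g, of "i+1"] i by simp
  then have b': "d ! i \<le> ?n - 1" unfolding dd_def by simp
  have c1: "cmp (cmp d) ! i = ?n - 1 - (cmp d ! (?n - Suc i))"
    using i by (simp add: cmp_def[of "cmp d"] rev_nth)
  have c2: "cmp d ! (?n - Suc i) = ?n - 1 - d ! i"
    using i by (simp add: cmp_def rev_nth Suc_diff_Suc)
  show "cmp (cmp d) ! i = d ! i" using b' c1 c2 by simp
qed

lemma reindex_rev:
  fixes f :: "nat \<Rightarrow> int"
  assumes "1 \<le> a" "b \<le> n"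
  shows "(\<Sum>i\<in>{a..b}. f (n + 1 - i)) = (\<Sum>j\<in>{n+1-b..n+1-a}. f j)"
  by (rule sum.reindex_bij_witness[of _ "\<lambda>j. n+1-j" "\<lambda>i. n+1-i"]) (use assms in auto)

lemma F1:
  assumes g: "good d" and k: "k \<le> length d"
  shows "T (cmp d) k = T d (length d - k)"
proof -
  let ?n = "length d"
  define l where "l = ?n - k"
  have kl: "int k = int ?n - int l" "k + l = ?n" using k unfolding l_def by auto
  define h1 where "h1 j = min (int k) (int ?n - 1 - dd d j)" for j
  define h2 where "h2 j = max 0 (int ?n - 1 - dd d j - int k + 1)" for j
  have p1: "(\<Sum>i\<in>{k+1..?n}. min (int k) (dd (cmp d) i)) = (\<Sum>i\<in>{k+1..?n}. h1 (?n + 1 - i))"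
    using dd_cmp[OF g] by (intro sum.cong refl) (simp add: h1_def)
  also have "\<dots> = (\<Sum>j\<in>{1..l}. h1 j)"
    using reindex_rev[of "k+1" ?n ?n h1] unfolding l_def by simp
  also have "\<dots> = (\<Sum>j\<in>{1..l}. int k - max 0 (dd d j - int l + 1))"
    unfolding h1_def using kl by (intro sum.cong refl) (simp add: min_def max_def)
  also have "\<dots> = int l * int k - (\<Sum>j\<in>{1..l}. max 0 (dd d j - int l + 1))"
    by (simp add: sum_subtractf)
  finally have P1: "(\<Sum>i\<in>{k+1..?n}. min (int k) (dd (cmp d) i)) = int l * int k - (\<Sum>j\<in>{1..l}. max 0 (dd d j - int l + 1))" .
  have p2: "(\<Sum>i\<in>{1..k}. max 0 (dd (cmp d) i - int k + 1)) = (\<Sum>i\<in>{1..k}. h2 (?n + 1 - i))"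
    using dd_cmp[OF g] k by (intro sum.cong refl) (simp add: h2_def)
  also have "\<dots> = (\<Sum>j\<in>{l+1..?n}. h2 j)"
    using reindex_rev[of 1 k ?n h2] k unfolding l_def by (simp add: Suc_diff_le)
  also have "\<dots> = (\<Sum>j\<in>{l+1..?n}. int l - min (int l) (dd d j))"
    unfolding h2_def using kl by (intro sum.cong refl) (simp add: min_def max_def)
  also have "\<dots> = int k * int l - (\<Sum>j\<in>{l+1..?n}. min (int l) (dd d j))"
    using kl by (simp add: sum_subtractf)
  finally have P2: "(\<Sum>i\<in>{1..k}. max 0 (dd (cmp d) i - int k + 1)) = int k * int l - (\<Sum>j\<in>{l+1..?n}. min (int l) (dd d j))" .
  show ?thesis unfolding T_def len_cmp P1 P2 l_def[symmetric] by (simp add: mult.commute)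
qed

lemma F5:
  assumes g: "good d" and n: "length d \<ge> 1" and t: "dd d (m_of d) = int (m_of d) - 1"
  shows "T d (m_of d - 1) = T d (m_of d)"
proof -
  let ?n = "length d" and ?m = "m_of d"
  define p where "p = ?m - 1"
  have p: "?m = p + 1" using m_props(1)[OF n] unfolding p_def by simp
  have pn: "p + 1 \<le> ?n" using m_props(2)[OF n] p by simp
  have tp: "dd d (p+1) = int p" using t p by simp
  have lo: "int p \<le> dd d i" if "1 \<le> i" "i \<le> p" for i
    using goodD1[OF g that(1), of "p+1"] that pn tp by simp
  have hi: "dd d i \<le> int p" if "p + 1 < i" "i \<le> ?n" for i
    using m_high[OF g n, of i] that p by simp
  have a1: "(\<Sum>i\<in>{p+1..?n}. min (int p) (dd d i)) = (\<Sum>i\<in>{p+1..p+1}. min (int p) (dd d i)) + (\<Sum>i\<in>{p+1+1..?n}. min (int p) (dd d i))"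
    using split_sum[of p "p+1" ?n "\<lambda>i. min (int p) (dd d i)"] pn by simp
  have a2: "(\<Sum>i\<in>{p+1+1..?n}. min (int p) (dd d i)) = (\<Sum>i\<in>{p+1+1..?n}. min (int (p+1)) (dd d i))"
  proof (intro sum.cong refl)
    fix i assume "i \<in> {p+1+1..?n}"
    then have "dd d i \<le> int p" using hi by auto
    then show "min (int p) (dd d i) = min (int (p+1)) (dd d i)" by simp
  qed
  have a3: "(\<Sum>i\<in>{1..p+1}. max 0 (dd d i - int (p+1) + 1)) = (\<Sum>i\<in>{1..p}. max 0 (dd d i - int (p+1) + 1)) + (\<Sum>i\<in>{p+1..p+1}. max 0 (dd d i - int (p+1) + 1))"
    using split_sum[of 0 p "p+1" "\<lambda>i. max 0 (dd d i - int (p+1) + 1)"] by simp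
  have a4: "(\<Sum>i\<in>{1..p}. max 0 (dd d i - int (p+1) + 1)) = (\<Sum>i\<in>{1..p}. dd d i - int p)"
  proof (intro sum.cong refl)
    fix i assume "i \<in> {1..p}" then have "int p \<le> dd d i" using lo by auto
    then show "max 0 (dd d i - int (p+1) + 1) = dd d i - int p" by simp
  qed
  have a5: "(\<Sum>i\<in>{1..p}. max 0 (dd d i - int p + 1)) = (\<Sum>i\<in>{1..p}. (dd d i - int p) + 1)"
  proof (intro sum.cong refl)
    fix i assume "i \<in> {1..p}" then have "int p \<le> dd d i" using lo by auto
    then show "max 0 (dd d i - int p + 1) = (dd d i - int p) + 1" by simp
  qed
  have a6: "(\<Sum>i\<in>{1..p}. (dd d i - int p) + 1) = (\<Sum>i\<in>{1..p}. dd d i - int p) + int p"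
    by (simp add: sum.distrib)
  have e1: "T d p = (\<Sum>i\<in>{p+1..?n}. min (int p) (dd d i)) - (\<Sum>i\<in>{1..p}. max 0 (dd d i - int p + 1))"
    unfolding T_def ..
  have e2: "T d (p+1) = (\<Sum>i\<in>{p+1+1..?n}. min (int (p+1)) (dd d i)) - (\<Sum>i\<in>{1..p+1}. max 0 (dd d i - int (p+1) + 1))"
    unfolding T_def ..
  have b1: "(\<Sum>i\<in>{p+1..p+1}. min (int p) (dd d i)) = int p" using tp by simp
  have b2: "(\<Sum>i\<in>{p+1..p+1}. max 0 (dd d i - int (p+1) + 1)) = 0" using tp by simp
  have "T d p = T d (p+1)" using e1 e2 a1 a2 a3 a4 a5 a6 b1 b2 by linarith
  then show ?thesis using p by simp
qed



lemma F4:
  assumes g: "good d" and n: "length d \<ge> 1"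
  shows "(dd d (m_of d) = int (m_of d) - 1 \<and> m_of (cmp d) = length d + 1 - m_of d) \<or> m_of (cmp d) = length d - m_of d"
proof -
  let ?n = "length d" and ?m = "m_of d"
  let ?A = "{i\<in>{1..length (cmp d)}. dd (cmp d) i \<ge> int i - 1}"
  have fA: "finite ?A" by simp
  have mem: "i \<in> ?A \<longleftrightarrow> 1 \<le> i \<and> i \<le> ?n \<and> dd d (?n + 1 - i) \<le> int ?n - int i" for i
    using dd_cmp[OF g, of i] by auto
  have m1: "1 \<le> ?m" "?m \<le> ?n" "dd d ?m \<ge> int ?m - 1" using m_props[OF n] by auto
  show ?thesis
  proof (cases "dd d ?m = int ?m - 1")
    case True
    have "Max ?A = ?n + 1 - ?m"
    proof (rule Max_eqI[OF fA])
      show "?n + 1 - ?m \<in> ?A" unfolding mem using m1 True by (simp; arith)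
      fix y assume "y \<in> ?A"
      then have y: "1 \<le> y" "y \<le> ?n" "dd d (?n + 1 - y) \<le> int ?n - int y" unfolding mem by auto
      show "y \<le> ?n + 1 - ?m"
      proof (rule ccontr)
        assume "\<not> y \<le> ?n + 1 - ?m"
        then have "dd d ?m \<le> dd d (?n + 1 - y)" using goodD1[OF g, of "?n + 1 - y" ?m] y m1 by simp
        then show False using y m1 True \<open>\<not> y \<le> ?n + 1 - ?m\<close> by linarith
      qed
    qed
    then show ?thesis using True m_of_def[of "cmp d"] by simp
  next
    case False
    then have gt: "dd d ?m \<ge> int ?m" using m1 by linarith
    have mn: "?m < ?n"
    proof (rule ccontr)
      assume "\<not> ?m < ?n"
      then have "?m = ?n" using m1 by simp
      then show False using goodD2[OF g, of ?m] m1 gt by simp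
    qed
    have "Max ?A = ?n - ?m"
    proof (rule Max_eqI[OF fA])
      have "dd d (?m + 1) \<le> int ?m - 1" using m_high[OF g n, of "?m + 1"] mn by simp
      then show "?n - ?m \<in> ?A" unfolding mem using m1 mn by (simp add: Suc_diff_Suc)
      fix y assume "y \<in> ?A"
      then have y: "1 \<le> y" "y \<le> ?n" "dd d (?n + 1 - y) \<le> int ?n - int y" unfolding mem by auto
      show "y \<le> ?n - ?m"
      proof (rule ccontr)
        assume c: "\<not> y \<le> ?n - ?m"
        then have "dd d ?m \<le> dd d (?n + 1 - y)" using goodD1[OF g, of "?n + 1 - y" ?m] y m1 by simp
        then show False using y m1 gt c by linarith
      qed
    qed
    then show ?thesis using m_of_def[of "cmp d"] by simp
  qed
qed




lemma T_low:
  assumes g: "good d" and n: "length d \<ge> 1" and j: "j \<le> m_of d"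
  shows "T d j = (if j = 0 then 0 else Delta d j)"
  using T0 F2[OF g n _ j] by auto

lemma T_upper:
  assumes g: "good d" and n: "length d \<ge> 1" and B: "\<And>j. j \<le> m_of d \<Longrightarrow> T d j \<le> B" and k: "k \<le> length d"
  shows "T d k \<le> B"
proof (cases "k \<le> m_of d")
  case True then show ?thesis using B by simp
next
  case False
  then obtain j where "j \<le> m_of d" "T d k \<le> T d j" using F3[OF g n _ k] by auto
  then show ?thesis using B[of j] by simp
qed

lemma T_lower:
  assumes g: "good d" and n: "length d \<ge> 1" and B: "\<And>j. j \<le> m_of d \<Longrightarrow> B \<le> T d j" and k: "k \<le> length d"
  shows "B \<le> T d k"
proof (cases "k \<le> m_of d")
  case True then show ?thesis using B by simp
next
  case False
  then obtain j where "j \<le> m_of d" "T d j \<le> T d k" using F3'[OF g n _ k] by auto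
  then show ?thesis using B[of j] by simp
qed

lemma Delta_cmp_T:
  assumes g: "good d" and n: "length d \<ge> 1" and k: "1 \<le> k" "k \<le> m_of (cmp d)"
  shows "Delta (cmp d) k = T d (length d - k)"
proof -
  have gc: "good (cmp d)" and nc: "length (cmp d) \<ge> 1" using good_cmp[OF g] n by auto
  have "k \<le> length d" using m_props(2)[OF nc] k by simp
  then show ?thesis using F2[OF gc nc k] F1[OF g] by simp
qed

lemma NA:
  assumes g: "good d" and n: "length d \<ge> 1"
  shows "Delta (cmp d) (m_of (cmp d)) = Delta d (m_of d)"
proof -
  have gc: "good (cmp d)" and nc: "length (cmp d) \<ge> 1" using good_cmp[OF g] n by auto
  have e: "Delta (cmp d) (m_of (cmp d)) = T d (length d - m_of (cmp d))"
    using Delta_cmp_T[OF g n] m_props(1)[OF nc] by simp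
  have m1: "1 \<le> m_of d" "m_of d \<le> length d" using m_props[OF n] by auto
  from F4[OF g n] show ?thesis
  proof
    assume a: "dd d (m_of d) = int (m_of d) - 1 \<and> m_of (cmp d) = length d + 1 - m_of d"
    then have "length d - m_of (cmp d) = m_of d - 1" using m1 by auto
    then show ?thesis using e F5[OF g n] a F2[OF g n m1(1) order.refl] by simp
  next
    assume "m_of (cmp d) = length d - m_of d"
    then have "length d - m_of (cmp d) = m_of d" using m1 by auto
    then show ?thesis using e F2[OF g n m1(1) order.refl] by simp
  qed
qed

lemma Dstar_ge:
  assumes n: "length d \<ge> 1" and j: "1 \<le> j" "j \<le> m_of d"
  shows "Delta d j \<le> Delta_star d"
  unfolding Delta_star_def using j by (intro Max_ge) auto

lemma NB:
  assumes g: "good d" and n: "length d \<ge> 1" and nn: "Delta_star d \<ge> 0"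
  shows "Delta_star (cmp d) \<le> Delta_star d"
proof -
  have gc: "good (cmp d)" and nc: "length (cmp d) \<ge> 1" using good_cmp[OF g] n by auto
  have up: "T d k \<le> Delta_star d" if "k \<le> length d" for k
  proof (rule T_upper[OF g n _ that])
    fix j assume "j \<le> m_of d"
    then show "T d j \<le> Delta_star d" using T_low[OF g n] Dstar_ge[OF n, of j] nn by auto
  qed
  have ne: "Delta (cmp d) ` {1..m_of (cmp d)} \<noteq> {}" using m_props(1)[OF nc] by auto
  show ?thesis unfolding Delta_star_def[of "cmp d"]
  proof (rule Max.boundedI[OF _ ne])
    show "finite (Delta (cmp d) ` {1..m_of (cmp d)})" by simp
    fix x assume "x \<in> Delta (cmp d) ` {1..m_of (cmp d)}"
    then obtain k where "k \<in> {1..m_of (cmp d)}" "x = Delta (cmp d) k" by auto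
    then show "x \<le> Delta_star d" using Delta_cmp_T[OF g n] up by auto
  qed
qed

lemma NT:
  assumes g: "good d" and n: "length d \<ge> 1" and z: "\<forall>k\<in>{1..m_of d}. Delta d k = 0"
  shows "\<forall>k\<in>{1..m_of (cmp d)}. Delta (cmp d) k = 0"
proof
  fix k assume k: "k \<in> {1..m_of (cmp d)}"
  have low: "T d j = 0" if "j \<le> m_of d" for j using T_low[OF g n that] z that by auto
  have nc: "length (cmp d) \<ge> 1" using n by simp
  have kn: "length d - k \<le> length d" by simp
  have "T d (length d - k) \<le> 0" by (rule T_upper[OF g n _ kn]) (simp add: low)
  moreover have "0 \<le> T d (length d - k)" by (rule T_lower[OF g n _ kn]) (simp add: low)
  ultimately show "Delta (cmp d) k = 0" using Delta_cmp_T[OF g n] k by auto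
qed

lemma NW:
  assumes g: "good d" and n: "length d \<ge> 1" and z: "\<forall>k\<in>{1..m_of d}. Delta d k \<le> 1"
  shows "\<forall>k\<in>{1..m_of (cmp d)}. Delta (cmp d) k \<le> 1"
proof
  fix k assume k: "k \<in> {1..m_of (cmp d)}"
  have low: "T d j \<le> 1" if "j \<le> m_of d" for j using T_low[OF g n that] z that by auto
  have kn: "length d - k \<le> length d" by simp
  have "T d (length d - k) \<le> 1" by (rule T_upper[OF g n _ kn]) (simp add: low)
  then show "Delta (cmp d) k \<le> 1" using Delta_cmp_T[OF g n] k by auto
qed



lemma edges_at:
  assumes "simple_graph V F" "v \<in> V"
  shows "{e\<in>F. v \<in> e} = (\<lambda>u. {v,u}) ` {u\<in>V. u \<noteq> v \<and> {v,u} \<in> F}"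
proof
  show "{e\<in>F. v \<in> e} \<subseteq> (\<lambda>u. {v,u}) ` {u\<in>V. u \<noteq> v \<and> {v,u} \<in> F}"
  proof
    fix e assume e: "e \<in> {e\<in>F. v \<in> e}"
    then obtain a b where ab: "e = {a,b}" "a \<noteq> b" "a \<in> V" "b \<in> V" using assms(1) unfolding simple_graph_def by blast
    show "e \<in> (\<lambda>u. {v,u}) ` {u\<in>V. u \<noteq> v \<and> {v,u} \<in> F}"
    proof (cases "v = a")
      case True
      then show ?thesis using e ab by (intro image_eqI[of _ _ b]) auto
    next
      case False
      then have "v = b" using e ab by auto
      then show ?thesis using e ab by (intro image_eqI[of _ _ a]) (auto simp: insert_commute)
    qed
  qed
qed auto

lemma degree_nbr:
  assumes "simple_graph V F" "v \<in> V"
  shows "degree F v = card {u\<in>V. u \<noteq> v \<and> {v,u} \<in> F}"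
proof -
  have "inj_on (\<lambda>u. {v,u}) {u\<in>V. u \<noteq> v \<and> {v,u} \<in> F}"
    by (auto simp: inj_on_def doubleton_eq_iff)
  then show ?thesis unfolding degree_def edges_at[OF assms] by (simp add: card_image)
qed

lemma simple_complement:
  assumes "simple_graph V E"
  shows "simple_graph V (complement V E)"
proof -
  have "complement V E \<subseteq> {e. \<exists>u v. e = {u, v} \<and> u \<noteq> v \<and> u \<in> V \<and> v \<in> V}"
    unfolding complement_def by auto
  then show ?thesis using assms unfolding simple_graph_def by simp
qed

lemma comp_mem:
  assumes "u \<in> V" "v \<in> V" "u \<noteq> v"
  shows "{v,u} \<in> complement V E \<longleftrightarrow> {v,u} \<notin> E"
proof
  assume "{v,u} \<in> complement V E"
  then obtain a b where "{v,u} = {a,b}" "{a,b} \<notin> E" unfolding complement_def by blast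
  then show "{v,u} \<notin> E" by simp
next
  assume "{v,u} \<notin> E"
  then show "{v,u} \<in> complement V E" using assms unfolding complement_def by blast
qed

lemma degree_comp:
  assumes g: "simple_graph V E" and v: "v \<in> V"
  shows "degree (complement V E) v + degree E v = card V - 1"
proof -
  have fV: "finite V" using g simple_graph_def by auto
  have "degree (complement V E) v = card {u\<in>V. u \<noteq> v \<and> {v,u} \<notin> E}"
  proof -
    have "{u\<in>V. u \<noteq> v \<and> {v,u} \<in> complement V E} = {u\<in>V. u \<noteq> v \<and> {v,u} \<notin> E}"
      using comp_mem[of _ V v E] v by auto
    then show ?thesis using degree_nbr[OF simple_complement[OF g] v] by simp
  qed
  moreover have "degree E v = card {u\<in>V. u \<noteq> v \<and> {v,u} \<in> E}" using degree_nbr[OF g v] .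
  moreover have "card {u\<in>V. u \<noteq> v \<and> {v,u} \<notin> E} + card {u\<in>V. u \<noteq> v \<and> {v,u} \<in> E} = card (V - {v})"
  proof -
    have "{u\<in>V. u \<noteq> v \<and> {v,u} \<notin> E} \<union> {u\<in>V. u \<noteq> v \<and> {v,u} \<in> E} = V - {v}" by auto
    then show ?thesis using fV by (subst card_Un_disjoint[symmetric]) auto
  qed
  ultimately show ?thesis using v fV by simp
qed

lemma degree_le:
  assumes g: "simple_graph V E" and v: "v \<in> V"
  shows "degree E v \<le> card V - 1"
  using degree_comp[OF g v] by simp



lemma fin_V: "simple_graph V E \<Longrightarrow> finite V" by (simp add: simple_graph_def)

lemma deg_seq_len: "simple_graph V E \<Longrightarrow> length (deg_seq V E) = card V"
  unfolding deg_seq_def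
  by (metis length_rev mset_sorted_list_of_multiset size_image_mset size_mset size_mset_set)

lemma deg_seq_set: assumes "simple_graph V E" shows "set (deg_seq V E) = degree E ` V"
  unfolding deg_seq_def using fin_V[OF assms] by simp

lemma deg_seq_good:
  assumes g: "simple_graph V E"
  shows "good (deg_seq V E)"
proof -
  define L where "L = sorted_list_of_multiset (image_mset (degree E) (mset_set V))"
  have d: "deg_seq V E = rev L" unfolding deg_seq_def L_def ..
  have sL: "sorted L" unfolding L_def by simp
  let ?n = "length L"
  have ddL: "dd (deg_seq V E) i = int (L ! (?n - i))" if "1 \<le> i" "i \<le> ?n" for i
    using that unfolding dd_def d by (simp add: rev_nth Suc_diff_le)
  show ?thesis unfolding good_def
  proof (intro conjI allI impI)
    fix i j assume a: "1 \<le> i" "i \<le> j" "j \<le> length (deg_seq V E)"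
    then show "dd (deg_seq V E) j \<le> dd (deg_seq V E) i"
      using ddL[of i] ddL[of j] sorted_nth_mono[OF sL, of "?n - j" "?n - i"] by (simp add: d)
  next
    fix i assume a: "1 \<le> i" "i \<le> length (deg_seq V E)"
    then have "L ! (?n - i) \<in> set (deg_seq V E)" unfolding d by simp
    then obtain v where "v \<in> V" "L ! (?n - i) = degree E v" using deg_seq_set[OF g] by auto
    then have "L ! (?n - i) \<le> card V - 1" using degree_le[OF g] by simp
    moreover have "card V \<ge> 1" using \<open>v \<in> V\<close> fin_V[OF g] by (metis One_nat_def Suc_leI card_gt_0_iff empty_iff)
    ultimately show "dd (deg_seq V E) i \<le> int (length (deg_seq V E)) - 1"
      using ddL[of i] a deg_seq_len[OF g] by (simp add: d)
  qed
qed

lemma sorted_list_eq: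
  fixes xs :: "nat list"
  assumes "sorted xs" "mset xs = M"
  shows "sorted_list_of_multiset M = xs"
  using assms by (metis sorted_list_of_multiset_mset sorted_sort_id)

lemma deg_seq_comp:
  assumes g: "simple_graph V E"
  shows "deg_seq V (complement V E) = cmp (deg_seq V E)"
proof -
  define M where "M = image_mset (degree E) (mset_set V)"
  define L where "L = sorted_list_of_multiset M"
  define f where "f x = card V - 1 - x" for x :: nat
  have d: "deg_seq V E = rev L" unfolding deg_seq_def L_def M_def ..
  have len: "length (deg_seq V E) = card V" using deg_seq_len[OF g] .
  have c: "cmp (deg_seq V E) = map f L" proof -
    have "length L = card V" using len d by simp
    then show ?thesis unfolding cmp_def len f_def d by (simp add: rev_map)
  qed
  have "image_mset (degree (complement V E)) (mset_set V) = image_mset f M"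
    unfolding M_def image_mset.compositionality
  proof (rule image_mset_cong)
    fix v assume "v \<in># mset_set V"
    then have "v \<in> V" using fin_V[OF g] by simp
    then show "degree (complement V E) v = (f \<circ> degree E) v"
      using degree_comp[OF g] unfolding f_def by (metis comp_apply diff_add_inverse2)
  qed
  moreover have "sorted_list_of_multiset (image_mset f M) = rev (map f L)"
  proof (rule sorted_list_eq)
    have "sorted L" unfolding L_def by simp
    then show "sorted (rev (map f L))"
      unfolding sorted_wrt_rev sorted_wrt_map f_def
      by (rule sorted_wrt_mono_rel[rotated]) (simp add: diff_le_mono2)
    show "mset (rev (map f L)) = image_mset f M" unfolding L_def by simp
  qed
  ultimately show ?thesis unfolding deg_seq_def[of V "complement V E"] c by simp
qed

lemma sum_dd_V:
  assumes g: "simple_graph V E"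
  shows "(\<Sum>i\<in>{1..card V}. h (dd (deg_seq V E) i)) = (\<Sum>v\<in>V. h (int (degree E v)))"
proof -
  let ?d = "deg_seq V E"
  have len: "length ?d = card V" using deg_seq_len[OF g] .
  have "(\<Sum>i\<in>{1..card V}. h (dd ?d i)) = (\<Sum>i<card V. h (int (?d ! i)))"
    by (rule sum.reindex_bij_witness[of _ Suc "\<lambda>i. i - 1"]) (auto simp: dd_def)
  also have "\<dots> = sum_list (map (\<lambda>x. h (int x)) ?d)"
    by (simp add: sum_list_sum_nth len atLeast0LessThan)
  also have "\<dots> = sum_mset (image_mset (\<lambda>x. h (int x)) (mset ?d))"
    by (metis mset_map sum_mset_sum_list)
  also have "mset ?d = image_mset (degree E) (mset_set V)" unfolding deg_seq_def by simp
  also have "sum_mset (image_mset (\<lambda>x. h (int x)) (image_mset (degree E) (mset_set V))) = (\<Sum>v\<in>V. h (int (degree E v)))"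
    by (simp add: sum_unfold_sum_mset image_mset.compositionality comp_def)
  finally show ?thesis .
qed

lemma degree_pos:
  assumes g: "simple_graph V E" and u: "u \<in> V" "v \<in> V" "u \<noteq> v" "{v,u} \<in> E"
  shows "1 \<le> degree E u"
proof -
  have "v \<in> {w\<in>V. w \<noteq> u \<and> {u,w} \<in> E}" using u by (simp add: insert_commute)
  then have "card {w\<in>V. w \<noteq> u \<and> {u,w} \<in> E} \<ge> 1" using fin_V[OF g]
    by (metis (no_types, lifting) One_nat_def Suc_leI card_gt_0_iff empty_iff finite_subset mem_Collect_eq subsetI)
  then show ?thesis using degree_nbr[OF g u(1)] by simp
qed

lemma Delta1:
  assumes g: "simple_graph V E" and ne: "V \<noteq> {}"
  shows "0 \<le> Delta (deg_seq V E) 1"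
proof -
  let ?d = "deg_seq V E" and ?n = "card V"
  have fV: "finite V" using fin_V[OF g] .
  have n1: "1 \<le> ?n" using ne fV by (simp add: Suc_leI card_gt_0_iff)
  have len: "length ?d = ?n" using deg_seq_len[OF g] .
  have "?d ! 0 \<in> set ?d" using n1 len by simp
  then obtain v0 where v0: "v0 \<in> V" "?d ! 0 = degree E v0" using deg_seq_set[OF g] by auto
  have d1: "dd ?d 1 = int (degree E v0)" using v0 by (simp add: dd_def)
  have tot: "(\<Sum>i\<in>{1..?n}. min 1 (dd ?d i)) = min 1 (dd ?d 1) + (\<Sum>i\<in>{2..?n}. min 1 (dd ?d i))"
    using split_sum[of 0 1 ?n "\<lambda>i. min 1 (dd ?d i)"] n1 by (simp add: numeral_2_eq_2)
  have key: "(\<Sum>v\<in>V. min 1 (int (degree E v))) \<ge> int (degree E v0) + min 1 (int (degree E v0))"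
  proof (cases "degree E v0 = 0")
    case True
    then show ?thesis by (simp add: sum_nonneg)
  next
    case False
    define N where "N = {u\<in>V. u \<noteq> v0 \<and> {v0,u} \<in> E}"
    have cN: "card N = degree E v0" using degree_nbr[OF g v0(1)] unfolding N_def by simp
    have fN: "finite N" using fV unfolding N_def by simp
    have SV: "insert v0 N \<subseteq> V" using v0 unfolding N_def by auto
    have "(\<Sum>v\<in>insert v0 N. min 1 (int (degree E v))) = (\<Sum>v\<in>insert v0 N. 1)"
    proof (rule sum.cong[OF refl])
      fix v assume "v \<in> insert v0 N"
      then have "1 \<le> degree E v" using False degree_pos[OF g, of v v0] v0(1) unfolding N_def by auto
      then show "min 1 (int (degree E v)) = 1" by simp
    qed
    also have "\<dots> = int (card N) + 1" using fN by (simp add: N_def)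
    finally have "(\<Sum>v\<in>insert v0 N. min 1 (int (degree E v))) = int (degree E v0) + 1" using cN by simp
    moreover have "(\<Sum>v\<in>insert v0 N. min 1 (int (degree E v))) \<le> (\<Sum>v\<in>V. min 1 (int (degree E v)))"
      by (rule sum_mono2[OF fV SV]) simp
    ultimately show ?thesis using False by simp
  qed
  have "Delta ?d 1 = (\<Sum>i\<in>{2..?n}. min 1 (dd ?d i)) - dd ?d 1"
    unfolding Delta_def len by (simp add: numeral_2_eq_2)
  then show ?thesis using tot key sum_dd_V[OF g, of "min 1"] d1 by simp
qed



lemma split_comp:
  assumes g: "simple_graph V E" and s: "split_graph V E"
  shows "split_graph V (complement V E)"
proof -
  obtain K S where ks: "K \<union> S = V" "K \<inter> S = {}" "\<forall>u\<in>K. \<forall>v\<in>K. u \<noteq> v \<longrightarrow> {u, v} \<in> E"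
      "\<forall>u\<in>S. \<forall>v\<in>S. {u, v} \<notin> E" using s unfolding split_graph_def by blast
  have 1: "\<forall>u\<in>S. \<forall>v\<in>S. u \<noteq> v \<longrightarrow> {u, v} \<in> complement V E"
    using ks(1,4) comp_mem[of _ V _ E] by (metis UnCI insert_commute)
  have 2: "\<forall>u\<in>K. \<forall>v\<in>K. {u, v} \<notin> complement V E"
  proof (intro ballI)
    fix u v assume uv: "u \<in> K" "v \<in> K"
    show "{u, v} \<notin> complement V E"
    proof (cases "u = v")
      case True
      then show ?thesis unfolding complement_def by (auto simp: doubleton_eq_iff)
    next
      case False
      then show ?thesis using comp_mem[of v V u E] uv ks(1,3) by auto
    qed
  qed
  show ?thesis unfolding split_graph_def
    using ks(1,2) 1 2 by (intro exI[of _ S] exI[of _ K]) auto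
qed


theorem corollary11:
  fixes I :: "int set" and V :: "'a set" and E :: "'a set set"
  assumes "I \<subseteq> {0..}" and "simple_graph V E"
  shows "(Delta (deg_seq V E) (m_of (deg_seq V E)) \<in> I \<longrightarrow>
            Delta (deg_seq V (complement V E)) (m_of (deg_seq V (complement V E))) \<in> I)
       \<and> (Delta_star (deg_seq V E) \<in> I \<longrightarrow>
            Delta_star (deg_seq V (complement V E)) \<in> I)
       \<and> (split_graph V E \<longrightarrow> split_graph V (complement V E))
       \<and> (threshold_graph V E \<longrightarrow> threshold_graph V (complement V E))
       \<and> (weakly_threshold_graph V E \<longrightarrow> weakly_threshold_graph V (complement V E))"
proof (cases "V = {}")
  case True
  have "E = {}" using assms(2) True unfolding simple_graph_def by auto
  moreover have "complement V E = {}" using True unfolding complement_def by auto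
  ultimately show ?thesis by simp
next
  case False
  note g = assms(2)
  let ?d = "deg_seq V E"
  have gd: "good ?d" using deg_seq_good[OF g] .
  have fV: "finite V" using fin_V[OF g] .
  have n: "length ?d \<ge> 1" using deg_seq_len[OF g] False fV by (simp add: Suc_leI card_gt_0_iff)
  have c: "deg_seq V (complement V E) = cmp ?d" using deg_seq_comp[OF g] .
  have gc: "good (cmp ?d)" using good_cmp[OF gd] .
  have nc: "length (cmp ?d) \<ge> 1" using n by simp
  have cc: "cmp (cmp ?d) = ?d" using cmp_cmp[OF gd] .
  have nn1: "Delta_star ?d \<ge> 0"
    using Delta1[OF g False] Dstar_ge[OF n order.refl m_props(1)[OF n]] by simp
  have nn2: "Delta_star (cmp ?d) \<ge> 0"
    using Delta1[OF simple_complement[OF g] False] Dstar_ge[OF nc order.refl m_props(1)[OF nc]] c by simp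
  have A: "Delta (cmp ?d) (m_of (cmp ?d)) = Delta ?d (m_of ?d)" using NA[OF gd n] .
  have B: "Delta_star (cmp ?d) = Delta_star ?d"
    using NB[OF gd n nn1] NB[OF gc nc nn2] cc by simp
  have T: "threshold_graph V (complement V E)" if "threshold_graph V E"
    using NT[OF gd n] that c unfolding threshold_graph_def by simp
  have W: "weakly_threshold_graph V (complement V E)" if "weakly_threshold_graph V E"
    using NW[OF gd n] that c unfolding weakly_threshold_graph_def by simp
  show ?thesis using A B T W split_comp[OF g] c by simp
qed


end
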